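(* Let $\alpha,\beta>-1$. There exists $T>0$ such that, for $T$ sufficiently large, $$\widetilde{\mathbb{G}}_t^{\alpha,\beta}(x,y)\simeq(xy)^{\alpha+1/2}\big((1-x)(1-y)\big)^{\beta+1/2}\exp\Big(-t\pi^2\Big(\frac{\alpha+\beta+1}{2}\Big)^2\Big),\qquad t\ge T,$$ uniformly in $x,y\in(0,1)$ (and $t\ge T$).
   Context: For $\alpha,\beta>-1$ let $\mathcal{P}_n^{\alpha,\beta}(\theta)=c_n^{\alpha,\beta}P_n^{\alpha,\beta}(\cos\theta)$, $n\ge0$, $\theta\in(0,\pi)$, where $P_n^{\alpha,\beta}$ are the classical Jacobi polynomials and $c_n^{\alpha,\beta}>0$ make $\{\mathcal{P}_n^{\alpha,\beta}\}$ orthonormal in $L^2((0,\pi),(\sin\frac\theta2)^{2\alpha+1}(\cos\frac\theta2)^{2\beta+1}d\theta)$. Let $\phi_n^{\alpha,\beta}(\theta)=(\sin\frac\theta2)^{\alpha+1/2}(\cos\frac\theta2)^{\beta+1/2}\mathcal{P}_n^{\alpha,\beta}(\theta)$ and $\widetilde{\phi}_n^{\alpha,\beta}(x)=\sqrt{\pi}\,\phi_n^{\alpha,\beta}(\pi x)$, $x\in(0,1)$, an orthonormal basis of $L^2((0,1),dx)$. The heat kernel is $\widetilde{\mathbb{G}}_t^{\alpha,\beta}(x,y)=\sum_{n\ge0}\exp\big(-t\pi^2(n+\frac{\alpha+\beta+1}{2})^2\big)\widetilde{\phi}_n^{\alpha,\beta}(x)\widetilde{\phi}_n^{\alpha,\beta}(y)$,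 $t>0$. $X\simeq Y$ denotes two-sided comparison with constants independent of $x,y,t$. *)

theory Defs
  imports "HOL-Analysis.Analysis"
begin

definition jacobiP :: "real \<Rightarrow> real \<Rightarrow> nat \<Rightarrow> real \<Rightarrow> real" where
  "jacobiP a b n x =
     (\<Sum>k\<le>n. ((real n + a) gchoose (n - k)) * ((real n + b) gchoose k)
              * ((x - 1) / 2) ^ k * ((x + 1) / 2) ^ (n - k))"

definition jacobi_weight :: "real \<Rightarrow> real \<Rightarrow> real \<Rightarrow> real" where
  "jacobi_weight a b \<theta> = sin (\<theta> / 2) powr (2 * a + 1) * cos (\<theta> / 2) powr (2 * b + 1)"

definition jacobi_c :: "real \<Rightarrow> real \<Rightarrow> nat \<Rightarrow> real" where
  "jacobi_c a b n = 1 / sqrt (LBINT \<theta>:{0<..<pi}. (jacobiP a b n (cos \<theta>))\<^sup>2 * jacobi_weight a b \<theta>)"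

definition jacobi_P_norm :: "real \<Rightarrow> real \<Rightarrow> nat \<Rightarrow> real \<Rightarrow> real" where
  "jacobi_P_norm a b n \<theta> = jacobi_c a b n * jacobiP a b n (cos \<theta>)"

definition jacobi_phi :: "real \<Rightarrow> real \<Rightarrow> nat \<Rightarrow> real \<Rightarrow> real" where
  "jacobi_phi a b n \<theta> = sin (\<theta> / 2) powr (a + 1/2) * cos (\<theta> / 2) powr (b + 1/2) * jacobi_P_norm a b n \<theta>"

definition jacobi_phi_tilde :: "real \<Rightarrow> real \<Rightarrow> nat \<Rightarrow> real \<Rightarrow> real" where
  "jacobi_phi_tilde a b n x = sqrt pi * jacobi_phi a b n (pi * x)"

definition jacobi_heat_kernel :: "real \<Rightarrow> real \<Rightarrow> real \<Rightarrow> real \<Rightarrow> real \<Rightarrow> real" where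
  "jacobi_heat_kernel a b t x y =
     (\<Sum>n. exp (- t * pi\<^sup>2 * (real n + (a + b + 1) / 2)\<^sup>2)
           * jacobi_phi_tilde a b n x * jacobi_phi_tilde a b n y)"

end

theory Submission
  imports Defs "HOL-Real_Asymp.Real_Asymp"
begin



definition Bn :: "real \<Rightarrow> real \<Rightarrow> nat \<Rightarrow> real" where
  "Bn a b n = (\<Sum>k\<le>n. \<bar>(real n + a) gchoose (n - k)\<bar> * \<bar>(real n + b) gchoose k\<bar>)"

lemma Bn_nonneg: "0 \<le> Bn a b n"
  unfolding Bn_def by (intro sum_nonneg) auto

lemma jacobiP_bound:
  assumes "\<bar>u\<bar> \<le> 1"
  shows "\<bar>jacobiP a b n u\<bar> \<le> Bn a b n"
proof -
  have X: "\<bar>(u - 1) / 2\<bar> \<le> 1" and Y: "\<bar>(u + 1) / 2\<bar> \<le> 1" using assms by auto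
  have "\<bar>jacobiP a b n u\<bar> \<le> (\<Sum>k\<le>n. \<bar>((real n + a) gchoose (n - k)) * ((real n + b) gchoose k)
              * ((u - 1) / 2) ^ k * ((u + 1) / 2) ^ (n - k)\<bar>)"
    unfolding jacobiP_def by (rule sum_abs)
  also have "\<dots> \<le> Bn a b n"
    unfolding Bn_def
  proof (rule sum_mono)
    fix k assume "k \<in> {..n}"
    have "\<bar>((u - 1) / 2) ^ k\<bar> \<le> 1" using X by (simp add: power_abs power_le_one)
    moreover have "\<bar>((u + 1) / 2) ^ (n - k)\<bar> \<le> 1" using Y by (simp add: power_abs power_le_one)
    ultimately have "\<bar>((u - 1) / 2) ^ k * ((u + 1) / 2) ^ (n - k)\<bar> \<le> 1"
      by (simp add: abs_mult mult_le_one)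
    then have "\<bar>((real n + a) gchoose (n - k)) * ((real n + b) gchoose k)\<bar> * \<bar>((u - 1) / 2) ^ k * ((u + 1) / 2) ^ (n - k)\<bar>
        \<le> \<bar>((real n + a) gchoose (n - k)) * ((real n + b) gchoose k)\<bar> * 1"
      by (intro mult_left_mono) auto
    then show "\<bar>((real n + a) gchoose (n - k)) * ((real n + b) gchoose k)
              * ((u - 1) / 2) ^ k * ((u + 1) / 2) ^ (n - k)\<bar> \<le> \<bar>(real n + a) gchoose (n - k)\<bar> * \<bar>(real n + b) gchoose k\<bar>"
      by (simp add: abs_mult mult.assoc)
  qed
  finally show ?thesis .
qed

lemma jacobiP_one: "jacobiP a b n 1 = (real n + a) gchoose n"
proof -
  have "jacobiP a b n 1 = (\<Sum>k\<le>n. (if k = 0 then ((real n + a) gchoose n) else 0))"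
    unfolding jacobiP_def by (intro sum.cong) (auto simp: power_0_left)
  also have "\<dots> = (real n + a) gchoose n" by (simp add: sum.delta)
  finally show ?thesis .
qed

lemma Bn_ge_pn: "\<bar>(real n + a) gchoose n\<bar> \<le> Bn a b n"
proof -
  have "\<bar>(real n + a) gchoose (n - 0)\<bar> * \<bar>(real n + b) gchoose 0\<bar> \<le> Bn a b n"
    unfolding Bn_def by (rule member_le_sum) auto
  then show ?thesis by simp
qed

lemma jacobiP_lip:
  assumes "\<bar>u\<bar> \<le> 1" "n \<ge> 1"
  shows "\<bar>jacobiP a b n u - ((real n + a) gchoose n)\<bar> \<le> real n * Bn a b n * (1 - u)"
proof -
  define c where "c k = ((real n + a) gchoose (n - k)) * ((real n + b) gchoose k)" for k
  define g where "g v k = ((v - 1) / 2) ^ k * ((v + 1) / 2) ^ (n - k)" for v :: real and k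
  have P: "jacobiP a b n v = (\<Sum>k\<le>n. c k * g v k)" for v
    unfolding jacobiP_def c_def g_def by (simp add: mult.assoc)
  have D: "jacobiP a b n u - ((real n + a) gchoose n) = (\<Sum>k\<le>n. c k * (g u k - g 1 k))"
    using P[of u] P[of 1] jacobiP_one[of a b n] by (simp add: sum_subtractf right_diff_distrib)
  have gb: "\<bar>g u k - g 1 k\<bar> \<le> real n * (1 - u)" for k
  proof (cases "k = 0")
    case True
    have "-1 \<le> (u + 1) / 2 - 1" using assms by auto
    from Bernoulli_inequality[OF this, of n]
    have "1 + real n * ((u + 1) / 2 - 1) \<le> ((u + 1) / 2) ^ n"
      by (metis add.commute diff_add_cancel)
    moreover have "real n * ((u + 1) / 2 - 1) = - (real n * (1 - u)) / 2" by (simp add: field_simps)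
    moreover have "((u + 1) / 2) ^ n \<le> 1" using assms by (intro power_le_one) auto
    moreover have "0 \<le> real n * (1 - u)" using assms by auto
    ultimately have "\<bar>((u + 1) / 2) ^ n - 1\<bar> \<le> real n * (1 - u)"
      unfolding abs_le_iff by linarith
    then show ?thesis using True by (simp add: g_def)
  next
    case False
    have X: "\<bar>(u - 1) / 2\<bar> \<le> 1" and Y: "\<bar>(u + 1) / 2\<bar> \<le> 1" using assms by auto
    have "\<bar>((u - 1) / 2) ^ k\<bar> = \<bar>(u - 1) / 2\<bar> * \<bar>(u - 1) / 2\<bar> ^ (k - 1)"
      using False by (metis power_abs Suc_pred' neq0_conv power_Suc)
    also have "\<dots> \<le> \<bar>(u - 1) / 2\<bar> * 1" using X by (intro mult_left_mono power_le_one) auto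
    finally have 1: "\<bar>((u - 1) / 2) ^ k\<bar> \<le> (1 - u) / 2" using assms by auto
    have 2: "\<bar>((u + 1) / 2) ^ (n - k)\<bar> \<le> 1" using Y by (simp add: power_abs power_le_one)
    have "\<bar>g u k\<bar> \<le> (1 - u) / 2 * 1" unfolding g_def abs_mult
      using assms by (intro mult_mono 1 2) auto
    moreover have "g 1 k = 0" using False by (simp add: g_def)
    moreover have "(1 - u) / 2 \<le> real n * (1 - u)"
    proof -
      have "1 * (1 - u) \<le> real n * (1 - u)" using assms by (intro mult_right_mono) auto
      then show ?thesis using assms by auto
    qed
    ultimately show ?thesis by simp
  qed
  have "\<bar>\<Sum>k\<le>n. c k * (g u k - g 1 k)\<bar> \<le> (\<Sum>k\<le>n. \<bar>c k\<bar> * (real n * (1 - u)))"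
    by (rule order_trans[OF sum_abs], rule sum_mono) (auto simp: abs_mult intro: mult_left_mono gb)
  also have "\<dots> = Bn a b n * (real n * (1 - u))"
    by (simp add: Bn_def c_def sum_distrib_right abs_mult)
  finally show ?thesis using D by (simp add: mult_ac)
qed




lemma gchoose_abs_le: "\<bar>(r::real) gchoose j\<bar> \<le> (\<bar>r\<bar> + real j) ^ j"
proof -
  have "\<bar>r gchoose j\<bar> = (\<Prod>i=0..<j. \<bar>r - of_nat i\<bar>) / fact j"
    by (simp add: gbinomial_prod_rev abs_prod)
  also have "\<dots> \<le> (\<Prod>i=0..<j. \<bar>r - of_nat i\<bar>)"
  proof -
    have "0 \<le> (\<Prod>i=0..<j. \<bar>r - of_nat i\<bar>)" by (auto simp: prod_nonneg)
    moreover have "(1::real) \<le> fact j" by simp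
    ultimately show ?thesis by (simp add: divide_le_eq mult_le_cancel_left1)
  qed
  also have "\<dots> \<le> (\<Prod>i=0..<j. \<bar>r\<bar> + real j)"
    by (intro prod_mono) auto
  also have "\<dots> = (\<bar>r\<bar> + real j) ^ j" by simp
  finally show ?thesis .
qed

lemma pn_lower:
  assumes "a > -1"
  shows "min (a + 1) 1 ^ n / fact n \<le> (real n + a) gchoose n"
proof -
  have "(real n + a) gchoose n = pochhammer (a + 1) n / fact n"
    by (simp add: gbinomial_pochhammer' add_ac)
  moreover have "min (a + 1) 1 ^ n \<le> pochhammer (a + 1) n"
  proof -
    have "(\<Prod>i=0..<n. min (a + 1) 1) \<le> (\<Prod>i=0..<n. a + 1 + real i)"
      using assms by (intro prod_mono) auto
    then show ?thesis by (simp add: pochhammer_prod)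
  qed
  ultimately show ?thesis by (simp add: divide_right_mono)
qed

lemma Bn_upper:
  "Bn a b n \<le> (2 * real n + (\<bar>a\<bar> + \<bar>b\<bar> + 2)) ^ (2 * n + 1)"
proof -
  define R where "R = 2 * real n + (\<bar>a\<bar> + \<bar>b\<bar> + 2)"
  have R1: "1 \<le> R" unfolding R_def by auto
  have t: "\<bar>(real n + a) gchoose (n - k)\<bar> * \<bar>(real n + b) gchoose k\<bar> \<le> R ^ n * R ^ n"
    if "k \<le> n" for k
  proof (intro mult_mono)
    have "\<bar>(real n + a) gchoose (n - k)\<bar> \<le> (\<bar>real n + a\<bar> + real (n - k)) ^ (n - k)"
      by (rule gchoose_abs_le)
    also have "\<dots> \<le> R ^ (n - k)"
      by (intro power_mono) (auto simp: R_def)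
    also have "\<dots> \<le> R ^ n" using R1 by (intro power_increasing) auto
    finally show "\<bar>(real n + a) gchoose (n - k)\<bar> \<le> R ^ n" .
    have "\<bar>(real n + b) gchoose k\<bar> \<le> (\<bar>real n + b\<bar> + real k) ^ k"
      by (rule gchoose_abs_le)
    also have "\<dots> \<le> R ^ k"
      using that by (intro power_mono) (auto simp: R_def)
    also have "\<dots> \<le> R ^ n" using R1 that by (intro power_increasing) auto
    finally show "\<bar>(real n + b) gchoose k\<bar> \<le> R ^ n" .
  qed (use R1 in auto)
  have "Bn a b n \<le> (\<Sum>k\<le>n. R ^ n * R ^ n)"
    unfolding Bn_def by (intro sum_mono t) auto
  also have "\<dots> = (real n + 1) * R ^ (2 * n)" by (simp add: power_add[symmetric] mult_2)
  also have "\<dots> \<le> R * R ^ (2 * n)"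
    by (intro mult_right_mono) (auto simp: R_def)
  also have "\<dots> = R ^ (2 * n + 1)" by simp
  finally show ?thesis unfolding R_def .
qed




lemma cos_lower: "1 - x\<^sup>2 / 2 \<le> cos (x::real)"
proof -
  have "cos x = 1 - 2 * sin (x/2) ^ 2" using cos_double_sin[of "x/2"] by simp
  moreover have "sin (x/2) ^ 2 \<le> (x/2) ^ 2"
    using abs_sin_x_le_abs_x[of "x/2"] by (metis abs_le_square_iff)
  ultimately show ?thesis by (simp add: power_divide)
qed

lemma sin_ge_z_cos:
  assumes "0 \<le> z" "z \<le> pi/2"
  shows "z * cos z \<le> sin z"
proof -
  have "(\<lambda>x. sin x - x * cos x) 0 \<le> (\<lambda>x. sin x - x * cos x) z"
  proof (rule DERIV_nonneg_imp_nondecreasing[OF assms(1)])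
    fix x assume x: "0 \<le> x" "x \<le> z"
    have "DERIV (\<lambda>x. sin x - x * cos x) x :> cos x - (1 * cos x + x * (- sin x))"
      by (intro derivative_eq_intros) auto
    moreover have "0 \<le> cos x - (1 * cos x + x * (- sin x))"
    proof -
      have "0 \<le> sin x" using x assms by (intro sin_ge_zero) auto
      then show ?thesis using x by simp
    qed
    ultimately show "\<exists>y. DERIV (\<lambda>x. sin x - x * cos x) x :> y \<and> 0 \<le> y" by blast
  qed
  then show ?thesis by simp
qed

lemma sin_lower:
  assumes "0 \<le> z" "z \<le> pi/2"
  shows "z / pi \<le> sin z"
proof (cases "z \<le> 1")
  case True
  have "z * (1 - z\<^sup>2/2) \<le> z * cos z" using assms cos_lower[of z] by (intro mult_left_mono) auto
  moreover have "z / 2 \<le> z * (1 - z\<^sup>2/2)"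
  proof -
    have "z\<^sup>2 \<le> 1" using True assms by (simp add: power_le_one)
    then have "1/2 \<le> 1 - z\<^sup>2/2" by simp
    then show ?thesis using assms by (metis mult_left_mono mult.commute times_divide_eq_right mult_1 divide_inverse_commute mult.left_neutral)
  qed
  moreover have "z / pi \<le> z / 2" using assms pi_gt3 by (intro divide_left_mono) auto
  ultimately show ?thesis using sin_ge_z_cos[OF assms] by linarith
next
  case False
  have "(1::real) \<le> pi/2" using pi_gt3 by simp
  then have "1 * cos (1::real) \<le> sin 1" using sin_ge_z_cos[of 1] by simp
  moreover have "1 - 1/2 \<le> cos (1::real)" using cos_lower[of 1] by simp
  moreover have "sin 1 \<le> sin z" using False assms pi_gt3 by (intro sin_monotone_2pi_le) auto
  moreover have "z / pi \<le> 1/2" using assms pi_gt3 by (simp add: divide_le_eq)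
  ultimately show ?thesis by linarith
qed

lemma powr_low_abs:
  fixes l v p :: real
  assumes "0 < l" "l \<le> v" "v \<le> 1"
  shows "l powr \<bar>p\<bar> \<le> v powr p"
proof (cases "0 \<le> p")
  case True
  then show ?thesis using assms by (simp add: powr_mono2)
next
  case False
  have "l powr \<bar>p\<bar> \<le> 1" using assms by (intro powr_le1) auto
  also have "1 \<le> v powr p"
  proof -
    have "1 powr p \<le> v powr p" using False assms by (intro powr_mono2') auto
    then show ?thesis by simp
  qed
  finally show ?thesis .
qed

lemma powr_up_min:
  fixes l v p :: real
  assumes "0 < l" "l \<le> v" "v \<le> 1"
  shows "v powr p \<le> l powr (min p 0)"
proof (cases "0 \<le> p")
  case True
  then show ?thesis using assms by (simp add: powr_le1)
next
  case False
  then show ?thesis using assms by (simp add: powr_mono2')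
qed

lemma powr_compare:
  fixes u v K e :: real
  assumes "0 < u" "u / K \<le> v" "v \<le> K * u" "1 \<le> K"
  shows "v powr e \<le> K powr \<bar>e\<bar> * u powr e" "u powr e \<le> K powr \<bar>e\<bar> * v powr e"
proof -
  have v: "0 < v" using assms by (smt (verit) divide_pos_pos)
  have r1: "1 / K \<le> v / u" "v / u \<le> K" using assms
    by (auto simp: field_simps)
  have r2: "1 / K \<le> u / v" "u / v \<le> K" using assms v
    by (auto simp: field_simps)
  have gen: "r powr e \<le> K powr \<bar>e\<bar>" if "1 / K \<le> r" "r \<le> K" for r
  proof (cases "0 \<le> e")
    case True
    have rp: "0 < r" using that assms by (smt (verit) divide_pos_pos)
    then show ?thesis using that assms True by (simp add: powr_mono2)
  next
    case False
    have rp: "0 < r" using that assms by (smt (verit) divide_pos_pos)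
    have "r powr e \<le> (1 / K) powr e" using False that rp by (intro powr_mono2') auto
    also have "\<dots> = K powr \<bar>e\<bar>" using False assms by (simp add: powr_def ln_div)
    finally show ?thesis .
  qed
  have "v powr e = (v / u) powr e * u powr e" using assms v by (simp add: powr_divide)
  also have "\<dots> \<le> K powr \<bar>e\<bar> * u powr e" by (intro mult_right_mono gen r1) auto
  finally show "v powr e \<le> K powr \<bar>e\<bar> * u powr e" .
  have "u powr e = (u / v) powr e * v powr e" using assms v by (simp add: powr_divide)
  also have "\<dots> \<le> K powr \<bar>e\<bar> * v powr e" by (intro mult_right_mono gen r2) auto
  finally show "u powr e \<le> K powr \<bar>e\<bar> * v powr e" .
qed




lemma powr_int0:
  assumes "p > -1"
  shows "integrable lborel (\<lambda>x::real. indicator {0<..<pi} x *\<^sub>R x powr p)"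
proof -
  have "(\<lambda>x::real. x powr p) integrable_on {0<..pi}"
    using integrable_on_powr_from_0'[OF assms, of pi] by simp
  then have "(\<lambda>x::real. x powr p) absolutely_integrable_on {0<..pi}"
    by (rule nonnegative_absolutely_integrable_1) auto
  then have "set_integrable lebesgue {0<..<pi} (\<lambda>x::real. x powr p)"
    by (rule set_integrable_subset) auto
  then have "integrable (completion lborel) (\<lambda>x::real. indicator {0<..<pi} x *\<^sub>R x powr p)"
    unfolding set_integrable_def by simp
  moreover have "(\<lambda>x::real. indicator {0<..<pi} x *\<^sub>R x powr p) \<in> borel_measurable lborel"
    by measurable
  ultimately show ?thesis by (simp add: integrable_completion)
qed

lemma powr_int_pi:
  assumes "p > -1"
  shows "integrable lborel (\<lambda>x::real. indicator {0<..<pi} x *\<^sub>R (pi - x) powr p)"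
proof -
  have "integrable lborel (\<lambda>x::real. indicator {0<..<pi} (pi + (-1) * x) *\<^sub>R (pi + (-1) * x) powr p)"
    using lborel_integrable_real_affine[OF powr_int0[OF assms], of "-1" pi] by simp
  moreover have "indicator {0<..<pi} (pi + (-1) * x) = (indicator {0<..<pi} x :: real)" for x :: real
    by (auto simp: indicator_def)
  ultimately show ?thesis by simp
qed




lemma weight_integrable:
  assumes a: "a > -1" and b: "b > -1"
  shows "set_integrable lborel {0<..<pi} (jacobi_weight a b)"
proof -
  define p where "p = min (2 * a + 1) 0"
  define q where "q = min (2 * b + 1) 0"
  have p: "p > -1" and q: "q > -1" using a b by (auto simp: p_def q_def)
  define h where "h x = (1/4) powr q * (indicator {0<..<pi} x *\<^sub>R (x / (2*pi)) powr p)
      + (1/4) powr p * (indicator {0<..<pi} x *\<^sub>R ((pi - x) / (2*pi)) powr q)" for x :: real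
  have hint: "integrable lborel h"
  proof -
    have e1: "(x / (2*pi)) powr p = (2*pi) powr (-p) * x powr p" if "x > 0" for x :: real
      using that by (simp add: powr_divide powr_minus_divide)
    have e2: "((pi - x) / (2*pi)) powr q = (2*pi) powr (-q) * (pi - x) powr q" if "x < pi" for x :: real
      using that by (simp add: powr_divide powr_minus_divide)
    have "h x = (1/4) powr q * (2*pi) powr (-p) * (indicator {0<..<pi} x *\<^sub>R x powr p)
      + (1/4) powr p * (2*pi) powr (-q) * (indicator {0<..<pi} x *\<^sub>R (pi - x) powr q)" for x
      by (cases "x \<in> {0<..<pi}") (auto simp: h_def e1 e2 indicator_def)
    moreover have "integrable lborel (\<lambda>x. (1/4) powr q * (2*pi) powr (-p) * (indicator {0<..<pi} x *\<^sub>R x powr p)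
      + (1/4) powr p * (2*pi) powr (-q) * (indicator {0<..<pi} x *\<^sub>R (pi - x) powr q))"
      using powr_int0[OF p] powr_int_pi[OF q] by simp
    ultimately show ?thesis by (metis (no_types, lifting) ext)
  qed
  have bound: "norm (indicator {0<..<pi} x *\<^sub>R jacobi_weight a b x) \<le> norm (h x)" for x :: real
  proof (cases "x \<in> {0<..<pi}")
    case False then show ?thesis by (simp add: h_def)
  next
    case True
    then have x: "0 < x" "x < pi" by auto
    define X where "X = (x / (2*pi)) powr p"
    define Y where "Y = ((pi - x) / (2*pi)) powr q"
    have Xn: "0 \<le> X" and Yn: "0 \<le> Y" by (auto simp: X_def Y_def)
    have s1: "x / (2*pi) \<le> sin (x/2)" using sin_lower[of "x/2"] x by simp
    have s2: "sin (x/2) \<le> 1" by simp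
    have c1: "cos (x/2) = sin ((pi - x)/2)" by (simp add: cos_sin_eq diff_divide_distrib)
    have c2: "(pi - x) / (2*pi) \<le> cos (x/2)" using sin_lower[of "(pi - x)/2"] x c1 by simp
    have ws: "sin (x/2) powr (2*a+1) \<le> X"
      unfolding X_def p_def by (rule powr_up_min) (use x s1 in auto)
    have wc: "cos (x/2) powr (2*b+1) \<le> Y"
      unfolding Y_def q_def by (rule powr_up_min) (use x c2 in auto)
    have w: "jacobi_weight a b x \<le> X * Y"
      unfolding jacobi_weight_def by (intro mult_mono ws wc) (auto simp: X_def)
    have "X * Y \<le> (1/4) powr q * X + (1/4) powr p * Y"
    proof (cases "x \<le> pi/2")
      case True
      have "Y \<le> (1/4) powr (min q 0)"
        unfolding Y_def by (rule powr_up_min) (use x True in auto)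
      then have "X * Y \<le> X * (1/4) powr q" using Xn q by (simp add: mult_left_mono q_def)
      moreover have "0 \<le> (1/4) powr p * Y" using Yn by simp
      ultimately show ?thesis by (simp add: mult.commute)
    next
      case False
      have "X \<le> (1/4) powr (min p 0)"
        unfolding X_def by (rule powr_up_min) (use x False in auto)
      then have "X * Y \<le> (1/4) powr p * Y" using Yn by (simp add: mult_right_mono p_def)
      moreover have "0 \<le> (1/4) powr q * X" using Xn by simp
      ultimately show ?thesis by simp
    qed
    moreover have "0 \<le> jacobi_weight a b x" by (simp add: jacobi_weight_def)
    moreover have "h x = (1/4) powr q * X + (1/4) powr p * Y" using True by (simp add: h_def X_def Y_def)
    ultimately show ?thesis using w True by simp
  qed
  have "integrable lborel (\<lambda>x. indicator {0<..<pi} x *\<^sub>R jacobi_weight a b x)"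
    by (rule Bochner_Integration.integrable_bound[OF hint _ AE_I2[OF bound]])
       (unfold jacobi_weight_def, measurable)
  then show ?thesis unfolding set_integrable_def .
qed




definition Iint :: "real \<Rightarrow> real \<Rightarrow> nat \<Rightarrow> real" where
  "Iint a b n = (LBINT \<theta>:{0<..<pi}. (jacobiP a b n (cos \<theta>))\<^sup>2 * jacobi_weight a b \<theta>)"

lemma Iint_nonneg: "0 \<le> Iint a b n"
  unfolding Iint_def set_lebesgue_integral_def
  by (rule integral_nonneg_AE, rule AE_I2) (auto simp: jacobi_weight_def indicator_def)

lemma jacobi_c_sq: "jacobi_c a b n ^ 2 = 1 / Iint a b n"
  using Iint_nonneg[of a b n] unfolding jacobi_c_def Iint_def[symmetric]
  by (simp add: power_divide)

lemma Iint_lower: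
  fixes a b :: real and n :: nat and m L :: real
  assumes "0 < \<tau>" "\<tau> \<le> 1" "0 \<le> m"
    and pt: "\<And>\<theta>. \<tau>/2 \<le> \<theta> \<Longrightarrow> \<theta> \<le> \<tau> \<Longrightarrow> m \<le> (jacobiP a b n (cos \<theta>))\<^sup>2 * jacobi_weight a b \<theta>"
    and int: "set_integrable lborel {0<..<pi} (\<lambda>\<theta>. (jacobiP a b n (cos \<theta>))\<^sup>2 * jacobi_weight a b \<theta>)"
  shows "m * (\<tau>/2) \<le> Iint a b n"
proof -
  have sub: "{\<tau>/2..\<tau>} \<subseteq> {0<..<pi}" using assms pi_gt3 by auto
  have fi: "set_integrable lborel {0<..<pi} (\<lambda>\<theta>. m * indicator {\<tau>/2..\<tau>} \<theta>)"
  proof -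
    have "(\<lambda>\<theta>. indicator {0<..<pi} \<theta> *\<^sub>R (m * indicator {\<tau>/2..\<tau>} \<theta>)) = (\<lambda>\<theta>::real. m * indicator {\<tau>/2..\<tau>} \<theta>)"
    proof (rule ext)
      fix \<theta> :: real
      show "indicator {0<..<pi} \<theta> *\<^sub>R (m * indicator {\<tau>/2..\<tau>} \<theta>) = m * indicator {\<tau>/2..\<tau>} \<theta>"
      proof (cases "\<theta> \<in> {\<tau>/2..\<tau>}")
        case True then have "\<theta> \<in> {0<..<pi}" using sub by blast
        then show ?thesis using True by simp
      qed simp
    qed
    moreover have "integrable lborel (\<lambda>\<theta>::real. m * indicator {\<tau>/2..\<tau>} \<theta>)"
    proof -
      have "\<tau>/2 \<le> \<tau>" using assms by simp
      then show ?thesis by (intro integrable_mult_right) (simp add: integrable_indicator_iff)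
    qed
    ultimately show ?thesis unfolding set_integrable_def by simp
  qed
  have "(LBINT \<theta>:{0<..<pi}. m * indicator {\<tau>/2..\<tau>} \<theta>) = m * (\<tau>/2)"
  proof -
    have "(\<lambda>\<theta>. indicator {0<..<pi} \<theta> *\<^sub>R (m * indicator {\<tau>/2..\<tau>} \<theta>)) = (\<lambda>\<theta>::real. m * indicator {\<tau>/2..\<tau>} \<theta>)"
    proof (rule ext)
      fix \<theta> :: real
      show "indicator {0<..<pi} \<theta> *\<^sub>R (m * indicator {\<tau>/2..\<tau>} \<theta>) = m * indicator {\<tau>/2..\<tau>} \<theta>"
      proof (cases "\<theta> \<in> {\<tau>/2..\<tau>}")
        case True then have "\<theta> \<in> {0<..<pi}" using sub by blast
        then show ?thesis using True by simp
      qed simp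
    qed
    then have "(LBINT \<theta>:{0<..<pi}. m * indicator {\<tau>/2..\<tau>} \<theta>) = m * measure lborel {\<tau>/2..\<tau>}"
      unfolding set_lebesgue_integral_def by simp
    also have "\<dots> = m * (\<tau>/2)" using assms by simp
    finally show ?thesis .
  qed
  moreover have "(LBINT \<theta>:{0<..<pi}. m * indicator {\<tau>/2..\<tau>} \<theta>) \<le> Iint a b n"
    unfolding Iint_def
  proof (rule set_integral_mono[OF fi int])
    fix \<theta> :: real assume th: "\<theta> \<in> {0<..<pi}"
    show "m * indicator {\<tau>/2..\<tau>} \<theta> \<le> (jacobiP a b n (cos \<theta>))\<^sup>2 * jacobi_weight a b \<theta>"
    proof (cases "\<theta> \<in> {\<tau>/2..\<tau>}")
      case True then show ?thesis using pt by simp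
    next
      case False then show ?thesis by (simp add: jacobi_weight_def)
    qed
  qed
  ultimately show ?thesis by linarith
qed




lemma pointwise_lower:
  fixes a b :: real and n :: nat
  assumes n: "n \<ge> 1" and pn: "0 < (real n + a) gchoose n"
  defines "pn \<equiv> (real n + a) gchoose n"
  defines "\<tau> \<equiv> pn / (real n * Bn a b n)"
  assumes \<theta>: "\<tau>/2 \<le> \<theta>" "\<theta> \<le> \<tau>"
  shows "0 < \<tau>" "\<tau> \<le> 1"
    "(pn\<^sup>2 / 4) * ((\<tau> / (4*pi)) powr \<bar>2*a+1\<bar> * (1/2) powr \<bar>2*b+1\<bar>)
       \<le> (jacobiP a b n (cos \<theta>))\<^sup>2 * jacobi_weight a b \<theta>"
proof -
  have pnp: "0 < pn" using pn by (simp add: pn_def)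
  have pB: "pn \<le> Bn a b n" using Bn_ge_pn[of n a b] unfolding pn_def by simp
  have Bp: "0 < Bn a b n" using pnp pB by simp
  have nB: "Bn a b n \<le> real n * Bn a b n" using n Bp by simp
  show tp: "0 < \<tau>" unfolding \<tau>_def using pnp Bp n by simp
  have "pn \<le> real n * Bn a b n" using pB nB by linarith
  then show t1: "\<tau> \<le> 1" unfolding \<tau>_def using Bp n by (simp add: divide_le_eq)
  have nBp: "0 < real n * Bn a b n" using n Bp by simp
  have th0: "0 < \<theta>" using tp \<theta> by simp
  have "\<bar>jacobiP a b n (cos \<theta>) - pn\<bar> \<le> real n * Bn a b n * (1 - cos \<theta>)"
    unfolding pn_def by (rule jacobiP_lip) (use n in auto)
  also have "\<dots> \<le> real n * Bn a b n * (\<tau> / 2)"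
  proof (intro mult_left_mono)
    have "1 - cos \<theta> \<le> \<theta>\<^sup>2 / 2" using cos_lower[of \<theta>] by simp
    also have "\<dots> \<le> \<tau>\<^sup>2 / 2" using th0 \<theta> by (simp add: power_mono)
    also have "\<dots> \<le> \<tau> / 2" using tp t1 by (simp add: power2_eq_square mult_le_cancel_left1)
    finally show "1 - cos \<theta> \<le> \<tau> / 2" .
  qed (use nBp in auto)
  also have "\<dots> = pn / 2" unfolding \<tau>_def using nBp n Bp by simp
  finally have "pn / 2 \<le> jacobiP a b n (cos \<theta>)" unfolding abs_le_iff by linarith
  then have P2: "pn\<^sup>2 / 4 \<le> (jacobiP a b n (cos \<theta>))\<^sup>2"
    using pnp power_mono[of "pn/2" _ 2] by (simp add: power_divide)
  have s1: "\<tau> / (4*pi) \<le> sin (\<theta>/2)"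
  proof -
    have "(\<theta>/2) / pi \<le> sin (\<theta>/2)" using th0 \<theta> t1 pi_gt3 by (intro sin_lower) auto
    moreover have "\<tau> / (4*pi) \<le> (\<theta>/2) / pi" using \<theta> pi_gt3 by (simp add: field_simps)
    ultimately show ?thesis by linarith
  qed
  have ws: "(\<tau> / (4*pi)) powr \<bar>2*a+1\<bar> \<le> sin (\<theta>/2) powr (2*a+1)"
    by (rule powr_low_abs) (use s1 tp in auto)
  have c1: "1/2 \<le> cos (\<theta>/2)"
  proof -
    have "1 - (\<theta>/2)\<^sup>2/2 \<le> cos (\<theta>/2)" by (rule cos_lower)
    moreover have "(\<theta>/2)\<^sup>2 \<le> 1" using th0 \<theta> t1 by (simp add: power_le_one)
    ultimately show ?thesis by linarith
  qed
  have wc: "(1/2) powr \<bar>2*b+1\<bar> \<le> cos (\<theta>/2) powr (2*b+1)"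
    by (rule powr_low_abs) (use c1 in auto)
  have "(\<tau> / (4*pi)) powr \<bar>2*a+1\<bar> * (1/2) powr \<bar>2*b+1\<bar> \<le> jacobi_weight a b \<theta>"
    unfolding jacobi_weight_def by (intro mult_mono ws wc) auto
  then show "(pn\<^sup>2 / 4) * ((\<tau> / (4*pi)) powr \<bar>2*a+1\<bar> * (1/2) powr \<bar>2*b+1\<bar>)
       \<le> (jacobiP a b n (cos \<theta>))\<^sup>2 * jacobi_weight a b \<theta>"
    using P2 by (intro mult_mono) auto
qed




lemma powr_minus1: "0 < (Z::real) \<Longrightarrow> Z powr (x - 1) = Z powr x / Z"
  by (simp add: powr_diff)

lemma csqB_bound:
  fixes a b :: real and n :: nat
  assumes a: "a > -1" and b: "b > -1" and n: "n \<ge> 1"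
  defines "Z \<equiv> 16 * pi / min (a+1) 1 * (2 * real n + (\<bar>a\<bar> + \<bar>b\<bar> + 2))"
  defines "P \<equiv> \<bar>2*a+1\<bar>" and "Q \<equiv> \<bar>2*b+1\<bar>"
  shows "jacobi_c a b n ^ 2 * Bn a b n ^ 2 \<le> Z powr ((12 + 4*P) * real n + (6 + 3*P + Q))"
proof -
  define \<mu> where "\<mu> = min (a+1) 1"
  define R where "R = 2 * real n + (\<bar>a\<bar> + \<bar>b\<bar> + 2)"
  define pn where "pn = (real n + a) gchoose n"
  define B where "B = Bn a b n"
  define \<tau> where "\<tau> = pn / (real n * B)"
  have mu: "0 < \<mu>" "\<mu> \<le> 1" using a by (auto simp: \<mu>_def)
  have R1: "1 \<le> R" and nR: "real n \<le> R" by (auto simp: R_def)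
  have c0: "16 * pi \<le> 16 * pi / \<mu>" "1 / \<mu> \<le> 16 * pi / \<mu>"
    using mu pi_gt3 by (auto simp: field_simps)
  have Zdef: "Z = 16 * pi / \<mu> * R" by (simp add: Z_def \<mu>_def R_def)
  have c01: "1 \<le> 16 * pi / \<mu>" using c0(1) pi_gt3 by linarith
  have ZR: "R \<le> Z"
  proof -
    have "1 * R \<le> 16 * pi / \<mu> * R" using c01 R1 by (intro mult_right_mono) auto
    then show ?thesis unfolding Zdef by simp
  qed
  have Zc: "16 * pi / \<mu> \<le> Z"
  proof -
    have "16 * pi / \<mu> * 1 \<le> 16 * pi / \<mu> * R" using c01 R1 by (intro mult_left_mono) auto
    then show ?thesis unfolding Zdef by simp
  qed
  have Zmu: "1 / \<mu> \<le> Z" using Zc c0 by linarith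
  have Zpi: "16 * pi \<le> Z" using Zc c0 by linarith
  have Z1: "1 \<le> Z" using Zpi pi_gt3 by linarith
  have Zp: "0 < Z" using Z1 by linarith
  note zp = powr_realpow[OF Zp]
  have Bub: "B \<le> Z powr (2 * real n + 1)"
  proof -
    have "B \<le> R ^ (2 * n + 1)" using Bn_upper[of a b n] by (simp add: B_def R_def)
    also have "\<dots> \<le> Z ^ (2 * n + 1)" using R1 ZR by (intro power_mono) auto
    also have "\<dots> = Z powr (2 * real n + 1)" using zp[of "2*n+1"] by (simp add: add.commute)
    finally show ?thesis .
  qed
  have pnlb: "Z powr (- (2 * real n)) \<le> pn"
  proof -
    have "fact n \<le> real n ^ n" using fact_le_power[of n, where 'a=real] by simp
    also have "\<dots> \<le> R ^ n" using nR by (intro power_mono) auto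
    finally have f: "fact n \<le> R ^ n" .
    have "\<mu> ^ n / R ^ n \<le> \<mu> ^ n / fact n"
      using f mu R1 by (intro divide_left_mono) auto
    also have "\<dots> \<le> pn" using pn_lower[OF a, of n] by (simp add: pn_def \<mu>_def)
    finally have 1: "\<mu> ^ n / R ^ n \<le> pn" .
    have "R / \<mu> \<le> Z * Z"
    proof -
      have "R / \<mu> = R * (1 / \<mu>)" by simp
      also have "\<dots> \<le> Z * Z" using ZR Zmu R1 mu by (intro mult_mono) auto
      finally show ?thesis .
    qed
    then have "(R / \<mu>) ^ n \<le> (Z * Z) ^ n" using R1 mu by (intro power_mono) auto
    moreover have "(Z * Z) ^ n = Z powr (2 * real n)"
      using zp[of "2*n"] by (simp add: power_mult power2_eq_square[symmetric])
    ultimately have rz: "(R / \<mu>) ^ n \<le> Z powr (2 * real n)" by simp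
    have "1 / Z powr (2 * real n) \<le> 1 / (R / \<mu>) ^ n"
    proof (rule divide_left_mono[OF rz])
      show "0 < Z powr (2 * real n) * (R / \<mu>) ^ n" using R1 mu Zp by (intro mult_pos_pos zero_less_power) auto
    qed auto
    also have "\<dots> = \<mu> ^ n / R ^ n" by (simp add: power_divide)
    finally show ?thesis using 1 by (simp add: powr_minus_divide)
  qed
  have "0 < Z powr (- (2 * real n))" using Zp by simp
  then have pnp: "0 < pn" using pnlb by linarith
  have pn_gt: "0 < (real n + a) gchoose n" using pnp by (simp add: pn_def)
  have pB: "pn \<le> B" using Bn_ge_pn[of n a b] pnp by (simp add: B_def pn_def)
  have Bp: "0 < B" using pB pnp by linarith
  have tp: "0 < \<tau>" unfolding \<tau>_def using pnp Bp n by simp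
  have "B \<le> real n * B" using n Bp by simp
  then have "pn \<le> real n * B" using pB by linarith
  then have t1: "\<tau> \<le> 1" unfolding \<tau>_def using Bp n by (simp add: divide_le_eq)
  have tlb: "Z powr (- (4 * real n + 2)) \<le> \<tau>"
  proof -
    have "real n * B \<le> Z * Z powr (2 * real n + 1)" using nR ZR Bub Bp by (intro mult_mono) auto
    also have "\<dots> = Z powr (2 * real n + 2)" using Zp by (simp add: powr_mult_base add.commute)
    finally have nb: "real n * B \<le> Z powr (2 * real n + 2)" .
    have "Z powr (- (4 * real n + 2)) = Z powr (- (2 * real n)) / Z powr (2 * real n + 2)"
      by (simp add: powr_diff[symmetric])
    also have "\<dots> \<le> pn / (real n * B)"
    proof (rule frac_le)
      show "0 \<le> pn" using pnp by simp
      show "Z powr (- (2 * real n)) \<le> pn" by (rule pnlb)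
      show "0 < real n * B" using n Bp by simp
    qed (rule nb)
    finally show ?thesis by (simp add: \<tau>_def)
  qed
  define m where "m = (pn\<^sup>2 / 4) * ((\<tau> / (4*pi)) powr P * (1/2) powr Q)"
  have m0: "0 \<le> m" by (simp add: m_def)
  have pw: "m \<le> (jacobiP a b n (cos \<theta>))\<^sup>2 * jacobi_weight a b \<theta>" if "\<tau>/2 \<le> \<theta>" "\<theta> \<le> \<tau>" for \<theta>
    using pointwise_lower(3)[where a=a and b=b and n=n and \<theta>=\<theta>, OF n pn_gt that[unfolded \<tau>_def pn_def B_def]]
    unfolding m_def P_def Q_def \<tau>_def pn_def B_def .
  have L: "m * (\<tau>/2) \<le> Iint a b n \<or> Iint a b n = 0"
  proof (cases "set_integrable lborel {0<..<pi} (\<lambda>\<theta>. (jacobiP a b n (cos \<theta>))\<^sup>2 * jacobi_weight a b \<theta>)")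
    case True
    have "m * (\<tau>/2) \<le> Iint a b n"
      by (rule Iint_lower[OF tp t1 m0 pw True])
    then show ?thesis by simp
  next
    case False
    then show ?thesis unfolding Iint_def set_lebesgue_integral_def set_integrable_def
      by (simp add: not_integrable_integral_eq)
  qed
  define E where "E = 8 * real n + 4 + (4 * real n + 3) * P + Q"
  have mlb: "Z powr (- E) \<le> m * (\<tau>/2)"
  proof -
    have e1: "Z powr (- (4 * real n + 1)) \<le> pn\<^sup>2 / 4"
    proof -
      have "(Z powr (- (2 * real n)))\<^sup>2 \<le> pn\<^sup>2" using pnlb by (intro power_mono) auto
      moreover have "(Z powr (- (2 * real n)))\<^sup>2 = Z powr (- (4 * real n))"
        unfolding power2_eq_square powr_add[symmetric] by simp
      ultimately have "Z powr (- (4 * real n)) \<le> pn\<^sup>2" by simp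
      moreover have "Z powr (- (4 * real n + 1)) = Z powr (- (4 * real n)) / Z"
      proof -
        have "- (4 * real n + 1) = - (4 * real n) - 1" by simp
        then show ?thesis using powr_minus1[OF Zp, of "- (4 * real n)"] by simp
      qed
      moreover have "Z powr (- (4 * real n)) / Z \<le> Z powr (- (4 * real n)) / 4"
        using Zpi pi_gt3 by (intro divide_left_mono) auto
      moreover have "Z powr (- (4 * real n)) / 4 \<le> pn\<^sup>2 / 4"
        using \<open>Z powr (- (4 * real n)) \<le> pn\<^sup>2\<close> by (rule divide_right_mono) simp
      ultimately show ?thesis by linarith
    qed
    have e2: "Z powr (- (4 * real n + 3)) \<le> \<tau> / (4*pi)"
    proof -
      have "Z powr (- (4 * real n + 3)) = Z powr (- (4 * real n + 2)) / Z"
      proof -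
        have "- (4 * real n + 3) = - (4 * real n + 2) - 1" by simp
        then show ?thesis by (simp only: powr_minus1[OF Zp])
      qed
      also have "\<dots> \<le> Z powr (- (4 * real n + 2)) / (4*pi)"
        using Zpi pi_gt3 by (intro divide_left_mono) auto
      also have "\<dots> \<le> \<tau> / (4*pi)" using tlb by (intro divide_right_mono) auto
      finally show ?thesis .
    qed
    have e3: "Z powr (- (4 * real n + 3)) \<le> \<tau> / 2"
    proof -
      have "Z powr (- (4 * real n + 3)) = Z powr (- (4 * real n + 2)) / Z"
      proof -
        have "- (4 * real n + 3) = - (4 * real n + 2) - 1" by simp
        then show ?thesis by (simp only: powr_minus1[OF Zp])
      qed
      also have "\<dots> \<le> Z powr (- (4 * real n + 2)) / 2"
        using Zpi pi_gt3 by (intro divide_left_mono) auto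
      also have "\<dots> \<le> \<tau> / 2" using tlb by (intro divide_right_mono) auto
      finally show ?thesis .
    qed
    have e4: "Z powr (- ((4 * real n + 3) * P)) \<le> (\<tau> / (4*pi)) powr P"
    proof -
      have "(Z powr (- (4 * real n + 3))) powr P \<le> (\<tau> / (4*pi)) powr P"
        using e2 by (intro powr_mono2) (auto simp: P_def)
      moreover have "(Z powr (- (4 * real n + 3))) powr P = Z powr (- ((4 * real n + 3) * P))"
        unfolding powr_powr by (simp add: algebra_simps)
      ultimately show ?thesis by simp
    qed
    have e5: "Z powr (- Q) \<le> (1/2) powr Q"
    proof -
      have "(1/Z) powr Q \<le> (1/2) powr Q"
        using Zpi pi_gt3 by (intro powr_mono2) (auto simp: Q_def field_simps)
      then show ?thesis by (simp add: powr_minus_divide powr_divide)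
    qed
    have ee: "- E = - (4 * real n + 1) + (- ((4 * real n + 3) * P) + - Q) + - (4 * real n + 3)"
      by (simp add: E_def algebra_simps)
    have "Z powr (- E) = Z powr (- (4 * real n + 1)) * (Z powr (- ((4 * real n + 3) * P)) * Z powr (- Q))
        * Z powr (- (4 * real n + 3))"
      unfolding ee powr_add by (rule refl)
    also have "\<dots> \<le> (pn\<^sup>2 / 4) * ((\<tau> / (4*pi)) powr P * (1/2) powr Q) * (\<tau> / 2)"
      by (intro mult_mono e1 e2 e3 e4 e5) auto
    finally show ?thesis by (simp add: m_def)
  qed
  have "0 < Z powr (- E)" using Zp by simp
  then have mtp: "0 < m * (\<tau>/2)" using mlb by linarith
  have csq: "jacobi_c a b n ^ 2 \<le> 1 / (m * (\<tau>/2))"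
  proof -
    have "jacobi_c a b n ^ 2 = 1 / Iint a b n" by (rule jacobi_c_sq)
    show ?thesis
    proof (cases "Iint a b n = 0")
      case True then show ?thesis using \<open>jacobi_c a b n ^ 2 = 1 / Iint a b n\<close> mtp by simp
    next
      case False
      then have le: "m * (\<tau>/2) \<le> Iint a b n" using L by simp
      have "1 / Iint a b n \<le> 1 / (m * (\<tau>/2))"
        by (rule divide_left_mono[OF le]) (use mtp le in auto)
      then show ?thesis using \<open>jacobi_c a b n ^ 2 = 1 / Iint a b n\<close> by simp
    qed
  qed
  have "jacobi_c a b n ^ 2 * Bn a b n ^ 2 \<le> 1 / (m * (\<tau>/2)) * (Z powr (2 * real n + 1)) ^ 2"
    using csq Bub Bp mtp by (intro mult_mono power_mono) (auto simp: B_def)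
  also have "\<dots> \<le> Z powr E * Z powr (4 * real n + 2)"
  proof (intro mult_mono)
    show "1 / (m * (\<tau>/2)) \<le> Z powr E"
    proof -
      have "1 / (m * (\<tau>/2)) \<le> 1 / Z powr (- E)" 
      proof (rule divide_left_mono[OF mlb])
        show "0 < m * (\<tau> / 2) * Z powr - E" using mtp Zp by simp
      qed auto
      then show ?thesis by (simp add: powr_minus_divide)
    qed
    show "(Z powr (2 * real n + 1))\<^sup>2 \<le> Z powr (4 * real n + 2)"
      by (simp add: power2_eq_square powr_add[symmetric])
  qed auto
  also have "\<dots> = Z powr ((12 + 4*P) * real n + (6 + 3*P + Q))"
  proof -
    have "(12 + 4*P) * real n + (6 + 3*P + Q) = E + (4 * real n + 2)"
      by (simp add: E_def algebra_simps)
    then show ?thesis by (simp only: powr_add)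
  qed
  finally show ?thesis .
qed




lemma asymp_aux:
  fixes c A s E F K :: real
  assumes "c > 0" "A > 0"
  shows "(\<lambda>n::nat. exp (- c * real n * (real n + 2 * s) + (E * real n + F) * (K + ln (2 * real n + A))))
           \<in> O(\<lambda>n. (1/2)^n)"
  using assms by real_asymp

lemma g_summable:
  fixes a b :: real
  assumes a: "a > -1" and b: "b > -1"
  shows "summable (\<lambda>n. exp (- (pi\<^sup>2) * real n * (real n + 2 * ((a + b + 1) / 2))) * (jacobi_c a b n ^ 2 * Bn a b n ^ 2))"
proof -
  define s where "s = (a + b + 1) / 2"
  define P where "P = \<bar>2*a+1\<bar>"
  define Q where "Q = \<bar>2*b+1\<bar>"
  define c0 where "c0 = 16 * pi / min (a+1) 1"
  define A where "A = \<bar>a\<bar> + \<bar>b\<bar> + 2"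
  define E where "E = 12 + 4*P"
  define F where "F = 6 + 3*P + Q"
  define G where "G n = exp (- (pi\<^sup>2) * real n * (real n + 2 * s) + (E * real n + F) * (ln c0 + ln (2 * real n + A)))" for n :: nat
  have c0p: "0 < c0" using a by (auto simp: c0_def)
  have Ap: "0 < A" by (simp add: A_def)
  have GO: "G \<in> O(\<lambda>n. (1/2)^n)"
    unfolding G_def by (rule asymp_aux) (use Ap in auto)
  have Gs: "summable G"
    by (rule summable_comparison_test_bigo[OF _ GO]) (simp add: summable_geometric)
  show ?thesis
  proof (rule summable_comparison_test_ev[OF _ Gs])
    show "\<forall>\<^sub>F n in sequentially. norm (exp (- (pi\<^sup>2) * real n * (real n + 2 * ((a + b + 1) / 2))) * (jacobi_c a b n ^ 2 * Bn a b n ^ 2)) \<le> G n"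
      unfolding eventually_sequentially
    proof (intro exI allI impI)
      fix n :: nat assume n: "1 \<le> n"
      define Z where "Z = c0 * (2 * real n + A)"
      have Zp: "0 < Z" using c0p Ap by (simp add: Z_def)
      have cb: "jacobi_c a b n ^ 2 * Bn a b n ^ 2 \<le> Z powr (E * real n + F)"
        using csqB_bound[OF a b n] by (simp add: Z_def c0_def A_def E_def F_def P_def Q_def)
      have lnZ: "ln Z = ln c0 + ln (2 * real n + A)" using c0p Ap by (simp add: Z_def ln_mult)
      have "Z powr (E * real n + F) = exp ((E * real n + F) * (ln c0 + ln (2 * real n + A)))"
        using Zp by (simp add: powr_def lnZ mult.commute)
      then have "exp (- (pi\<^sup>2) * real n * (real n + 2 * s)) * (jacobi_c a b n ^ 2 * Bn a b n ^ 2) \<le> G n"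
        unfolding G_def exp_add using cb by (intro mult_left_mono) auto
      then show "norm (exp (- (pi\<^sup>2) * real n * (real n + 2 * ((a + b + 1) / 2))) * (jacobi_c a b n ^ 2 * Bn a b n ^ 2)) \<le> G n"
        by (simp add: s_def)
    qed
  qed
qed




definition Sfun :: "real \<Rightarrow> real \<Rightarrow> real \<Rightarrow> real" where
  "Sfun a b x = sin (pi * x / 2) powr (a + 1/2) * cos (pi * x / 2) powr (b + 1/2)"

lemma Sfun_nonneg: "0 \<le> Sfun a b x" by (simp add: Sfun_def)

lemma phi_tilde_eq:
  "jacobi_phi_tilde a b n x = sqrt pi * (Sfun a b x * (jacobi_c a b n * jacobiP a b n (cos (pi * x))))"
  by (simp add: jacobi_phi_tilde_def jacobi_phi_def jacobi_P_norm_def Sfun_def mult_ac)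

lemma Sfun_compare:
  fixes a b x :: real
  assumes x: "0 < x" "x < 1"
  defines "Kc \<equiv> 2 powr \<bar>a + 1/2\<bar> * 2 powr \<bar>b + 1/2\<bar>"
  shows "Sfun a b x \<le> Kc * (x powr (a + 1/2) * (1 - x) powr (b + 1/2))"
    "x powr (a + 1/2) * (1 - x) powr (b + 1/2) \<le> Kc * Sfun a b x"
proof -
  have sb: "x / 2 \<le> sin (pi * x / 2)" "sin (pi * x / 2) \<le> 2 * x"
  proof -
    have "(pi * x / 2) / pi \<le> sin (pi * x / 2)" using x by (intro sin_lower) auto
    then show "x / 2 \<le> sin (pi * x / 2)" by simp
    have "sin (pi * x / 2) \<le> pi * x / 2" using x by (intro sin_x_le_x) auto
    also have "\<dots> \<le> 2 * x" using x pi_less_4 by auto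
    finally show "sin (pi * x / 2) \<le> 2 * x" .
  qed
  have ceq: "cos (pi * x / 2) = sin (pi * (1 - x) / 2)"
    by (simp add: cos_sin_eq right_diff_distrib diff_divide_distrib)
  have cb: "(1 - x) / 2 \<le> cos (pi * x / 2)" "cos (pi * x / 2) \<le> 2 * (1 - x)"
  proof -
    have "(pi * (1 - x) / 2) / pi \<le> sin (pi * (1 - x) / 2)" using x by (intro sin_lower) auto
    then show "(1 - x) / 2 \<le> cos (pi * x / 2)" using ceq by simp
    have "sin (pi * (1 - x) / 2) \<le> pi * (1 - x) / 2" using x by (intro sin_x_le_x) auto
    also have "\<dots> \<le> 2 * (1 - x)" using x pi_less_4 mult_right_mono[of pi 4 "1-x"] by auto
    finally show "cos (pi * x / 2) \<le> 2 * (1 - x)" using ceq by simp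
  qed
  note s = powr_compare[where u=x and v="sin (pi * x / 2)" and K=2 and e="a + 1/2"]
  note c = powr_compare[where u="1 - x" and v="cos (pi * x / 2)" and K=2 and e="b + 1/2"]
  have s1: "sin (pi * x / 2) powr (a + 1/2) \<le> 2 powr \<bar>a + 1/2\<bar> * x powr (a + 1/2)"
    and s2: "x powr (a + 1/2) \<le> 2 powr \<bar>a + 1/2\<bar> * sin (pi * x / 2) powr (a + 1/2)"
    using s sb x by auto
  have c1: "cos (pi * x / 2) powr (b + 1/2) \<le> 2 powr \<bar>b + 1/2\<bar> * (1 - x) powr (b + 1/2)"
    and c2: "(1 - x) powr (b + 1/2) \<le> 2 powr \<bar>b + 1/2\<bar> * cos (pi * x / 2) powr (b + 1/2)"
    using c cb x by auto
  have "Sfun a b x \<le> (2 powr \<bar>a + 1/2\<bar> * x powr (a + 1/2)) * (2 powr \<bar>b + 1/2\<bar> * (1 - x) powr (b + 1/2))"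
    unfolding Sfun_def by (intro mult_mono s1 c1) auto
  then show "Sfun a b x \<le> Kc * (x powr (a + 1/2) * (1 - x) powr (b + 1/2))"
    by (simp add: Kc_def mult_ac)
  have "x powr (a + 1/2) * (1 - x) powr (b + 1/2) \<le>
      (2 powr \<bar>a + 1/2\<bar> * sin (pi * x / 2) powr (a + 1/2)) * (2 powr \<bar>b + 1/2\<bar> * cos (pi * x / 2) powr (b + 1/2))"
    by (intro mult_mono s2 c2) auto
  then show "x powr (a + 1/2) * (1 - x) powr (b + 1/2) \<le> Kc * Sfun a b x"
    by (simp add: Kc_def Sfun_def mult_ac)
qed




lemma jacobiP_0: "jacobiP a b 0 u = 1"
  by (simp add: jacobiP_def)

lemma c0_pos:
  assumes a: "a > -1" and b: "b > -1"
  shows "0 < jacobi_c a b 0 ^ 2"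
proof -
  define m where "m = (1 / (4*pi)) powr \<bar>2*a+1\<bar> * (1/2) powr \<bar>2*b+1\<bar>"
  have mp: "0 < m" by (simp add: m_def)
  have eqf: "(\<lambda>\<theta>. (jacobiP a b 0 (cos \<theta>))\<^sup>2 * jacobi_weight a b \<theta>) = jacobi_weight a b"
    by (simp add: jacobiP_0)
  have int: "set_integrable lborel {0<..<pi} (\<lambda>\<theta>. (jacobiP a b 0 (cos \<theta>))\<^sup>2 * jacobi_weight a b \<theta>)"
    unfolding eqf by (rule weight_integrable[OF a b])
  have pw: "m \<le> (jacobiP a b 0 (cos \<theta>))\<^sup>2 * jacobi_weight a b \<theta>" if th: "1/2 \<le> \<theta>" "\<theta> \<le> 1" for \<theta> :: real
  proof -
    have s1: "1 / (4*pi) \<le> sin (\<theta>/2)"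
    proof -
      have "(\<theta>/2) / pi \<le> sin (\<theta>/2)" using th pi_gt3 by (intro sin_lower) auto
      moreover have "1 / (4*pi) \<le> (\<theta>/2) / pi" using th pi_gt3 by (simp add: field_simps)
      ultimately show ?thesis by linarith
    qed
    have ws: "(1 / (4*pi)) powr \<bar>2*a+1\<bar> \<le> sin (\<theta>/2) powr (2*a+1)"
      by (rule powr_low_abs) (use s1 in auto)
    have c1: "1/2 \<le> cos (\<theta>/2)"
    proof -
      have "1 - (\<theta>/2)\<^sup>2/2 \<le> cos (\<theta>/2)" by (rule cos_lower)
      moreover have "(\<theta>/2)\<^sup>2 \<le> 1" using th by (simp add: power_le_one)
      ultimately show ?thesis by linarith
    qed
    have wc: "(1/2) powr \<bar>2*b+1\<bar> \<le> cos (\<theta>/2) powr (2*b+1)"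
      by (rule powr_low_abs) (use c1 in auto)
    have "m \<le> jacobi_weight a b \<theta>"
      unfolding jacobi_weight_def m_def by (intro mult_mono ws wc) auto
    then show ?thesis by (simp add: jacobiP_0)
  qed
  have "m * (1/2) \<le> Iint a b 0"
    using Iint_lower[of 1 m a b 0] pw int mp by simp
  then have "0 < Iint a b 0" using mp by linarith
  then show ?thesis by (simp add: jacobi_c_sq)
qed




theorem proposition3p3:
  fixes a b :: real
  assumes "a > -1" and "b > -1"
  shows "\<exists>T>0. \<exists>C1>0. \<exists>C2>0. \<forall>t\<ge>T. \<forall>x\<in>{0<..<1}. \<forall>y\<in>{0<..<1}.
     C1 * ((x * y) powr (a + 1/2) * ((1 - x) * (1 - y)) powr (b + 1/2)
           * exp (- t * pi\<^sup>2 * ((a + b + 1) / 2)\<^sup>2))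
       \<le> jacobi_heat_kernel a b t x y \<and>
     jacobi_heat_kernel a b t x y
       \<le> C2 * ((x * y) powr (a + 1/2) * ((1 - x) * (1 - y)) powr (b + 1/2)
           * exp (- t * pi\<^sup>2 * ((a + b + 1) / 2)\<^sup>2))"
proof -
  note ab = assms
  define s where "s = (a + b + 1) / 2"
  define \<delta> where "\<delta> = 1 + 2 * s"
  have s2s: "2 * s = a + b + 1" by (simp add: s_def)
  have dp: "0 < \<delta>" unfolding \<delta>_def s2s using ab by linarith
  have s2: "-1 < 2 * s" unfolding s2s using ab by linarith
  define g where "g n = exp (- (pi\<^sup>2) * real n * (real n + 2 * s)) * (jacobi_c a b n ^ 2 * Bn a b n ^ 2)" for n
  have gs: "summable g" unfolding g_def s_def by (rule g_summable[OF ab])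
  have g0: "0 \<le> g n" for n by (simp add: g_def)
  define M where "M = (\<Sum>n. g (Suc n))"
  have gs1: "summable (\<lambda>n. g (Suc n))" using gs by (simp add: summable_Suc_iff)
  have M0: "0 \<le> M" unfolding M_def by (intro suminf_nonneg gs1 g0)
  define c0 where "c0 = jacobi_c a b 0 ^ 2"
  have c0p: "0 < c0" using c0_pos[OF ab] by (simp add: c0_def)
  define T where "T = 1 + 2 * M / (c0 * pi\<^sup>2 * \<delta>)"
  have T1: "1 \<le> T" using M0 c0p dp by (simp add: T_def)
  define Kc where "Kc = 2 powr \<bar>a + 1/2\<bar> * 2 powr \<bar>b + 1/2\<bar>"
  have Kc1: "1 \<le> Kc"
  proof -
    have "1 \<le> (2::real) powr \<bar>a + 1/2\<bar>" "1 \<le> (2::real) powr \<bar>b + 1/2\<bar>"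
      by (intro ge_one_powr_ge_zero; simp)+
    then show ?thesis unfolding Kc_def by (metis mult_le_cancel_left1 order_trans less_le_trans zero_less_one mult_1_right mult_left_mono zero_le_one)
  qed
  define C1 where "C1 = pi * c0 / (2 * Kc\<^sup>2)"
  define C2 where "C2 = 3 * pi * c0 * Kc\<^sup>2 / 2"
  have C1p: "0 < C1" using c0p Kc1 by (simp add: C1_def)
  have C2p: "0 < C2" using c0p Kc1 by (simp add: C2_def)
  have nn: "0 \<le> real n * (real n + 2 * s)" for n :: nat
  proof (cases "n = 0")
    case False then have "1 \<le> real n" by simp
    then show ?thesis using s2 by simp
  qed simp
  have main: "C1 * ((x * y) powr (a + 1/2) * ((1 - x) * (1 - y)) powr (b + 1/2)
           * exp (- t * pi\<^sup>2 * ((a + b + 1) / 2)\<^sup>2))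
       \<le> jacobi_heat_kernel a b t x y \<and>
     jacobi_heat_kernel a b t x y
       \<le> C2 * ((x * y) powr (a + 1/2) * ((1 - x) * (1 - y)) powr (b + 1/2)
           * exp (- t * pi\<^sup>2 * ((a + b + 1) / 2)\<^sup>2))"
    if t: "T \<le> t" and x: "x \<in> {0<..<1}" and y: "y \<in> {0<..<1}" for t x y
  proof -
    have t1: "1 \<le> t" using t T1 by simp
    define ES where "ES = exp (- t * pi\<^sup>2 * s\<^sup>2)"
    define Sx where "Sx = Sfun a b x"
    define Sy where "Sy = Sfun a b y"
    define K0 where "K0 = sqrt pi * sqrt pi * (Sx * Sy)"
    have K0n: "0 \<le> K0" by (simp add: K0_def Sx_def Sy_def Sfun_nonneg)
    have ESp: "0 < ES" by (simp add: ES_def)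
    define \<rho> where "\<rho> = exp (- ((t - 1) * pi\<^sup>2 * \<delta>))"
    define trm where "trm n = exp (- t * pi\<^sup>2 * (real n + (a + b + 1) / 2)\<^sup>2) * jacobi_phi_tilde a b n x * jacobi_phi_tilde a b n y" for n
    define Px where "Px n = jacobiP a b n (cos (pi * x))" for n
    define Py where "Py n = jacobiP a b n (cos (pi * y))" for n
    have term_eq: "trm n = K0 * (exp (- t * pi\<^sup>2 * (real n + s)\<^sup>2) * jacobi_c a b n ^ 2 * (Px n * Py n))" for n
      by (simp add: trm_def phi_tilde_eq K0_def Sx_def Sy_def Px_def Py_def s_def power2_eq_square mult_ac)
    have exp_split: "exp (- t * pi\<^sup>2 * (real n + s)\<^sup>2) = ES * exp (- t * pi\<^sup>2 * (real n * (real n + 2 * s)))" for n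
    proof -
      have "- t * pi\<^sup>2 * (real n + s)\<^sup>2 = - t * pi\<^sup>2 * s\<^sup>2 + - t * pi\<^sup>2 * (real n * (real n + 2 * s))"
        by (simp add: power2_eq_square algebra_simps)
      then show ?thesis unfolding ES_def by (simp only: exp_add[symmetric])
    qed
    have PB: "\<bar>Px n * Py n\<bar> \<le> Bn a b n ^ 2" for n
    proof -
      have "\<bar>Px n\<bar> \<le> Bn a b n" "\<bar>Py n\<bar> \<le> Bn a b n" unfolding Px_def Py_def
        by (intro jacobiP_bound; simp)+
      then show ?thesis by (simp add: abs_mult power2_eq_square mult_mono)
    qed
    have tb: "\<bar>trm n\<bar> \<le> K0 * ES * (exp (- t * pi\<^sup>2 * (real n * (real n + 2 * s))) * (jacobi_c a b n ^ 2 * Bn a b n ^ 2))" for n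
    proof -
      have "\<bar>trm n\<bar> = K0 * (ES * exp (- t * pi\<^sup>2 * (real n * (real n + 2 * s))) * jacobi_c a b n ^ 2 * \<bar>Px n * Py n\<bar>)"
        unfolding term_eq exp_split using K0n ESp by (simp add: abs_mult)
      also have "\<dots> \<le> K0 * (ES * exp (- t * pi\<^sup>2 * (real n * (real n + 2 * s))) * jacobi_c a b n ^ 2 * Bn a b n ^ 2)"
        using K0n ESp PB by (intro mult_left_mono) auto
      finally show ?thesis by (simp add: mult_ac)
    qed
    have e1: "exp (- t * pi\<^sup>2 * (real n * (real n + 2 * s))) \<le> exp (- (pi\<^sup>2) * real n * (real n + 2 * s))" for n :: nat
    proof -
      have "pi\<^sup>2 * (real n * (real n + 2 * s)) \<le> t * (pi\<^sup>2 * (real n * (real n + 2 * s)))"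
        using mult_right_mono[OF t1, of "pi\<^sup>2 * (real n * (real n + 2 * s))"] nn[of n] by simp
      then show ?thesis by (simp add: mult_ac)
    qed
    have e2: "exp (- t * pi\<^sup>2 * (real n * (real n + 2 * s))) \<le> \<rho> * exp (- (pi\<^sup>2) * real n * (real n + 2 * s))"
      if n: "1 \<le> n" for n :: nat
    proof -
      have "\<delta> \<le> real n * (real n + 2 * s)"
      proof -
        have "real n * (real n + 2 * s) - \<delta> = (real n - 1) * (real n + 1 + 2 * s)"
          by (simp add: \<delta>_def algebra_simps)
        moreover have "0 \<le> (real n - 1) * (real n + 1 + 2 * s)" using n s2 by simp
        ultimately show ?thesis by linarith
      qed
      then have "(t - 1) * (pi\<^sup>2 * \<delta>) \<le> (t - 1) * (pi\<^sup>2 * (real n * (real n + 2 * s)))"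
        using t1 by (intro mult_left_mono) auto
      then have "- t * pi\<^sup>2 * (real n * (real n + 2 * s)) \<le> - ((t - 1) * pi\<^sup>2 * \<delta>) + - (pi\<^sup>2) * real n * (real n + 2 * s)"
        by (simp add: algebra_simps)
      then show ?thesis unfolding \<rho>_def exp_add[symmetric] by simp
    qed
    have tb1: "\<bar>trm n\<bar> \<le> K0 * ES * g n" for n
      using tb[of n] e1[of n] K0n ESp
      by (smt (verit) g_def mult_left_mono mult_right_mono zero_le_mult_iff zero_le_power2)
    have tb2: "\<bar>trm (Suc n)\<bar> \<le> K0 * ES * \<rho> * g (Suc n)" for n
    proof -
      have "\<bar>trm (Suc n)\<bar> \<le> K0 * ES * (exp (- t * pi\<^sup>2 * (real (Suc n) * (real (Suc n) + 2 * s))) * (jacobi_c a b (Suc n) ^ 2 * Bn a b (Suc n) ^ 2))"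
        by (rule tb)
      also have "\<dots> \<le> K0 * ES * (\<rho> * exp (- (pi\<^sup>2) * real (Suc n) * (real (Suc n) + 2 * s)) * (jacobi_c a b (Suc n) ^ 2 * Bn a b (Suc n) ^ 2))"
        using K0n ESp e2[of "Suc n"] by (intro mult_left_mono mult_right_mono) auto
      finally show ?thesis by (simp add: g_def mult_ac)
    qed
    have ts: "summable trm"
      by (rule summable_comparison_test'[where N=0, OF summable_mult[OF gs, of "K0 * ES"]]) (use tb1 in auto)
    have ker: "jacobi_heat_kernel a b t x y = suminf trm"
      unfolding jacobi_heat_kernel_def trm_def by (simp add: mult.assoc)
    have t0: "trm 0 = K0 * ES * c0"
      using term_eq[of 0] by (simp add: jacobiP_0 Px_def Py_def ES_def c0_def)
    define Rr where "Rr = (\<Sum>n. trm (Suc n))"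
    have split: "suminf trm = trm 0 + Rr" unfolding Rr_def using suminf_split_head[OF ts] by simp
    have Rb: "\<bar>Rr\<bar> \<le> K0 * ES * \<rho> * M"
    proof -
      have s1: "summable (\<lambda>n. \<bar>trm (Suc n)\<bar>)"
        by (rule summable_comparison_test'[where N=0, OF summable_mult[OF gs1, of "K0 * ES * \<rho>"]]) (use tb2 in auto)
      have "\<bar>Rr\<bar> \<le> (\<Sum>n. \<bar>trm (Suc n)\<bar>)" unfolding Rr_def by (rule summable_rabs[OF s1])
      also have "\<dots> \<le> (\<Sum>n. K0 * ES * \<rho> * g (Suc n))"
        by (rule suminf_le[OF tb2 s1 summable_mult[OF gs1]])
      also have "\<dots> = K0 * ES * \<rho> * M" unfolding M_def by (rule suminf_mult[OF gs1])
      finally show ?thesis .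
    qed
    have rhoM: "\<rho> * M \<le> c0 / 2"
    proof -
      define z where "z = (t - 1) * pi\<^sup>2 * \<delta>"
      have z0: "0 \<le> z" using t1 dp by (simp add: z_def)
      have "1 + z \<le> exp z" by (rule exp_ge_add_one_self)
      then have r: "\<rho> * (1 + z) \<le> 1" unfolding \<rho>_def z_def[symmetric] by (simp add: exp_minus field_simps)
      have "2 * M / (c0 * pi\<^sup>2 * \<delta>) \<le> t - 1" using t by (simp add: T_def)
      then have "2 * M \<le> (t - 1) * (c0 * pi\<^sup>2 * \<delta>)" using c0p dp by (simp add: divide_le_eq)
      then have zM: "2 * M \<le> c0 * z" by (simp add: z_def mult_ac)
      have "M * 2 \<le> c0 * (1 + z)" using zM c0p by (simp add: distrib_left)
      then have "\<rho> * (M * 2) \<le> \<rho> * (c0 * (1 + z))" by (rule mult_left_mono) (simp add: \<rho>_def)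
      then have "\<rho> * M * 2 \<le> \<rho> * (c0 * (1 + z))" by (simp add: mult.assoc)
      also have "\<dots> = c0 * (\<rho> * (1 + z))" by simp
      also have "\<dots> \<le> c0 * 1" using r c0p by (intro mult_left_mono) auto
      finally show ?thesis by simp
    qed
    have KE: "0 \<le> K0 * ES" using K0n ESp by simp
    have Rb2: "\<bar>Rr\<bar> \<le> K0 * ES * (c0 / 2)"
    proof -
      have "K0 * ES * (\<rho> * M) \<le> K0 * ES * (c0 / 2)" using rhoM KE by (rule mult_left_mono)
      then show ?thesis using Rb by (simp add: mult_ac)
    qed
    have two: "K0 * ES * c0 = 2 * (K0 * ES * (c0 / 2))" "K0 * ES * (3 * c0 / 2) = 3 * (K0 * ES * (c0 / 2))"
      by simp_all
    have Rr2: "- (K0 * ES * (c0 / 2)) \<le> Rr" "Rr \<le> K0 * ES * (c0 / 2)" using Rb2 by (simp_all add: abs_le_iff)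
    have lowK: "K0 * ES * (c0 / 2) \<le> jacobi_heat_kernel a b t x y"
      using ker split t0 Rr2 two by linarith
    have upK: "jacobi_heat_kernel a b t x y \<le> K0 * ES * (3 * c0 / 2)"
      using ker split t0 Rr2 two by linarith
    have xx: "0 < x" "x < 1" and yy: "0 < y" "y < 1" using x y by auto
    define Qx where "Qx = x powr (a + 1/2) * (1 - x) powr (b + 1/2)"
    define Qy where "Qy = y powr (a + 1/2) * (1 - y) powr (b + 1/2)"
    have Qeq: "(x * y) powr (a + 1/2) * ((1 - x) * (1 - y)) powr (b + 1/2) = Qx * Qy"
      using xx yy by (simp add: Qx_def Qy_def powr_mult mult_ac)
    have Qn: "0 \<le> Qx" "0 \<le> Qy" by (simp_all add: Qx_def Qy_def)
    have Sn: "0 \<le> Sx" "0 \<le> Sy" by (simp_all add: Sx_def Sy_def Sfun_nonneg)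
    note cx = Sfun_compare[OF xx, of a b, folded Kc_def Sx_def Qx_def]
    note cy = Sfun_compare[OF yy, of a b, folded Kc_def Sy_def Qy_def]
    have SQ: "Sx * Sy \<le> Kc\<^sup>2 * (Qx * Qy)"
    proof -
      have "Sx * Sy \<le> (Kc * Qx) * (Kc * Qy)" using cx(1) cy(1) Sn Qn Kc1 by (intro mult_mono) auto
      then show ?thesis by (simp add: power2_eq_square mult_ac)
    qed
    have QS: "Qx * Qy \<le> Kc\<^sup>2 * (Sx * Sy)"
    proof -
      have "Qx * Qy \<le> (Kc * Sx) * (Kc * Sy)" using cx(2) cy(2) Sn Qn Kc1 by (intro mult_mono) auto
      then show ?thesis by (simp add: power2_eq_square mult_ac)
    qed
    have K0eq: "K0 = pi * (Sx * Sy)" by (simp add: K0_def)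
    have ESeq: "exp (- t * pi\<^sup>2 * ((a + b + 1) / 2)\<^sup>2) = ES" by (simp add: ES_def s_def)
    have Kc2: "0 < Kc\<^sup>2" using Kc1 by simp
    have low: "C1 * (Qx * Qy * ES) \<le> K0 * ES * (c0 / 2)"
    proof -
      have "C1 * (Qx * Qy * ES) = (pi * c0 / 2 * ES) * ((Qx * Qy) / Kc\<^sup>2)"
        by (simp add: C1_def field_simps)
      also have "\<dots> \<le> (pi * c0 / 2 * ES) * (Sx * Sy)"
      proof (rule mult_left_mono)
        show "Qx * Qy / Kc\<^sup>2 \<le> Sx * Sy" using QS Kc2 by (simp add: divide_le_eq mult.commute)
        show "0 \<le> pi * c0 / 2 * ES" using c0p ESp by simp
      qed
      also have "\<dots> = K0 * ES * (c0 / 2)" by (simp add: K0eq mult_ac)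
      finally show ?thesis .
    qed
    have up: "K0 * ES * (3 * c0 / 2) \<le> C2 * (Qx * Qy * ES)"
    proof -
      have "K0 * ES * (3 * c0 / 2) = (3 * pi * c0 / 2 * ES) * (Sx * Sy)" by (simp add: K0eq mult_ac)
      also have "\<dots> \<le> (3 * pi * c0 / 2 * ES) * (Kc\<^sup>2 * (Qx * Qy))"
        using SQ c0p ESp by (intro mult_left_mono) auto
      also have "\<dots> = C2 * (Qx * Qy * ES)" by (simp add: C2_def mult_ac)
      finally show ?thesis .
    qed
    show ?thesis unfolding Qeq ESeq using low up lowK upK by linarith
  qed
  show ?thesis
    using T1 C1p C2p main by (intro exI[of _ T] exI[of _ C1] exI[of _ C2] conjI allI impI ballI) auto
qed


end
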